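(* Let $\{X_\sigma,\pi^\sigma_\varrho,\Sigma\}$ be an inverse system of topological spaces such that all bonding maps $\pi^\sigma_\varrho$ are skeletal and all limit projections $\pi_\sigma:\varprojlim\{X_\sigma,\pi^\sigma_\varrho,\Sigma\}\to X_\sigma$ are onto. Then every projection $\pi_\sigma$ is skeletal.
   Context: A continuous surjection $f:X\to Y$ is skeletal if for every non-empty open $U\subseteq X$ the closure of $f[U]$ has non-empty interior. *)

theory Defs
  imports "HOL-Analysis.Analysis"
begin

definition skeletal :: "'a topology \<Rightarrow> 'b topology \<Rightarrow> ('a \<Rightarrow> 'b) \<Rightarrow> bool" where
  "skeletal X Y f \<longleftrightarrow> continuous_map X Y f \<and> f ` topspace X = topspace Y \<and>
     (\<forall>U. openin X U \<and> U \<noteq> {} \<longrightarrow> Y interior_of (Y closure_of (f ` U)) \<noteq> {})"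

definition directed_set :: "'i set \<Rightarrow> ('i \<Rightarrow> 'i \<Rightarrow> bool) \<Rightarrow> bool" where
  "directed_set S le \<longleftrightarrow>
     (\<forall>a\<in>S. le a a) \<and>
     (\<forall>a\<in>S. \<forall>b\<in>S. \<forall>c\<in>S. le a b \<and> le b c \<longrightarrow> le a c) \<and>
     (\<forall>a\<in>S. \<forall>b\<in>S. \<exists>c\<in>S. le a c \<and> le b c)"

definition inverse_system ::
  "'i set \<Rightarrow> ('i \<Rightarrow> 'i \<Rightarrow> bool) \<Rightarrow> ('i \<Rightarrow> 'a topology) \<Rightarrow> ('i \<Rightarrow> 'i \<Rightarrow> 'a \<Rightarrow> 'a) \<Rightarrow> bool" where
  "inverse_system S le X p \<longleftrightarrow> directed_set S le \<and>
     (\<forall>s\<in>S. \<forall>r\<in>S. le r s \<longrightarrow> continuous_map (X s) (X r) (p s r)) \<and>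
     (\<forall>s\<in>S. \<forall>x\<in>topspace (X s). p s s x = x) \<and>
     (\<forall>s\<in>S. \<forall>r\<in>S. \<forall>t\<in>S. le t r \<and> le r s \<longrightarrow>
        (\<forall>x\<in>topspace (X s). p r t (p s r x) = p s t x))"

definition inv_limit ::
  "'i set \<Rightarrow> ('i \<Rightarrow> 'i \<Rightarrow> bool) \<Rightarrow> ('i \<Rightarrow> 'a topology) \<Rightarrow> ('i \<Rightarrow> 'i \<Rightarrow> 'a \<Rightarrow> 'a) \<Rightarrow> ('i \<Rightarrow> 'a) topology" where
  "inv_limit S le X p = subtopology (product_topology X S)
     {x \<in> topspace (product_topology X S). \<forall>s\<in>S. \<forall>r\<in>S. le r s \<longrightarrow> p s r (x s) = x r}"

end

theory Submission
  imports Defs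
begin

lemma directed_ub:
  assumes d: "directed_set S le" and fin: "finite F"
  shows "F \<subseteq> S \<Longrightarrow> s \<in> S \<Longrightarrow> \<exists>u\<in>S. le s u \<and> (\<forall>t\<in>F. le t u)"
  using fin
proof (induction F)
  case empty
  then show ?case using d unfolding directed_set_def by blast
next
  case (insert a F)
  then obtain u where u: "u \<in> S" "le s u" "\<forall>t\<in>F. le t u" by auto
  from d insert.prems u(1) obtain c where c: "c \<in> S" "le u c" "le a c"
    unfolding directed_set_def by blast
  have "\<forall>t\<in>F. le t c" using d u c insert.prems unfolding directed_set_def by blast
  moreover have "le s c" using d u c insert.prems unfolding directed_set_def by blast
  ultimately show ?case using c by blast
qed

theorem proposition3:
  fixes S :: "'i set" and le :: "'i \<Rightarrow> 'i \<Rightarrow> bool"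
    and X :: "'i \<Rightarrow> 'a topology" and p :: "'i \<Rightarrow> 'i \<Rightarrow> 'a \<Rightarrow> 'a"
  assumes "inverse_system S le X p"
    and "\<forall>s\<in>S. \<forall>r\<in>S. le r s \<longrightarrow> skeletal (X s) (X r) (p s r)"
    and "\<forall>s\<in>S. (\<lambda>x. x s) ` topspace (inv_limit S le X p) = topspace (X s)"
  shows "\<forall>s\<in>S. skeletal (inv_limit S le X p) (X s) (\<lambda>x. x s)"
proof
  fix s assume sS: "s \<in> S"
  define T where "T = {x \<in> topspace (product_topology X S). \<forall>s\<in>S. \<forall>r\<in>S. le r s \<longrightarrow> p s r (x s) = x r}"
  have L: "inv_limit S le X p = subtopology (product_topology X S) T"
    unfolding inv_limit_def T_def by simp
  have tsL: "topspace (inv_limit S le X p) = T" unfolding L T_def by auto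
  have dir: "directed_set S le" using assms(1) unfolding inverse_system_def by blast
  have cont: "continuous_map (inv_limit S le X p) (X s) (\<lambda>x. x s)"
    unfolding L by (rule continuous_map_from_subtopology[OF continuous_map_product_projection[OF sS]])
  have "X s interior_of (X s closure_of ((\<lambda>x. x s) ` U)) \<noteq> {}"
    if U: "openin (inv_limit S le X p) U" "U \<noteq> {}" for U
  proof -
    obtain V where V: "openin (product_topology X S) V" "U = T \<inter> V"
      using U(1) unfolding L openin_subtopology by blast
    obtain x where x: "x \<in> U" using U(2) by blast
    then have xT: "x \<in> T" and xV: "x \<in> V" using V by auto
    obtain A where A: "finite {i \<in> S. A i \<noteq> topspace (X i)}" "\<forall>i\<in>S. openin (X i) (A i)"
      "x \<in> Pi\<^sub>E S A" "Pi\<^sub>E S A \<subseteq> V"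
      using V(1) xV unfolding openin_product_topology_alt by blast
    define F where "F = {i \<in> S. A i \<noteq> topspace (X i)}"
    obtain u where u: "u \<in> S" "le s u" "\<forall>t\<in>F. le t u"
      using directed_ub[OF dir A(1)[folded F_def], of s] sS F_def by auto
    define W where "W = (\<Inter>t\<in>F. {z \<in> topspace (X u). p u t z \<in> A t}) \<inter> topspace (X u)"
    have Wopen: "openin (X u) W"
      unfolding W_def
    proof (rule openin_INT)
      show "finite F" using A(1) F_def by simp
      fix t assume tF: "t \<in> F"
      then have "t \<in> S" "le t u" using F_def u by auto
      then have "continuous_map (X u) (X t) (p u t)"
        using assms(1) u(1) unfolding inverse_system_def by blast
      then show "openin (X u) {z \<in> topspace (X u). p u t z \<in> A t}"
        using openin_continuous_map_preimage A(2) \<open>t \<in> S\<close> by blast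
    qed
    have thr: "\<And>y r. y \<in> T \<Longrightarrow> r \<in> S \<Longrightarrow> le r u \<Longrightarrow> p u r (y u) = y r"
      using u(1) unfolding T_def by blast
    have xu: "x u \<in> W"
    proof -
      have "x u \<in> topspace (X u)" using xT u(1) unfolding T_def by (auto simp: PiE_iff)
      moreover have "p u t (x u) \<in> A t" if "t \<in> F" for t
        using that thr[OF xT] u A(3) F_def by (auto simp: PiE_iff)
      ultimately show ?thesis unfolding W_def by auto
    qed
    have sub: "p u s ` W \<subseteq> (\<lambda>x. x s) ` U"
    proof
      fix z assume "z \<in> p u s ` W"
      then obtain w where w: "w \<in> W" "z = p u s w" by blast
      then have "w \<in> topspace (X u)" unfolding W_def by blast
      then obtain y where y: "y \<in> T" "y u = w" using assms(3) u(1) tsL by (metis imageE)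
      have "y \<in> Pi\<^sub>E S A"
      proof -
        have ytop: "y \<in> (\<Pi>\<^sub>E i\<in>S. topspace (X i))" using y(1) unfolding T_def by simp
        show ?thesis unfolding PiE_iff
        proof (intro conjI ballI)
          fix i assume iS: "i \<in> S"
          show "y i \<in> A i"
          proof (cases "i \<in> F")
            case True
            then have "p u i w \<in> A i" using w(1) unfolding W_def by blast
            then show ?thesis using thr[OF y(1) iS] True u(3) y(2) by auto
          next
            case False
            then show ?thesis using iS ytop F_def by (auto simp: PiE_iff)
          qed
        next
          show "y \<in> extensional S" using ytop by (simp add: PiE_iff)
        qed
      qed
      then have "y \<in> U" using A(4) V(2) y(1) by blast
      moreover have "y s = z" using thr[OF y(1) sS u(2)] y(2) w(2) by simp
      ultimately show "z \<in> (\<lambda>x. x s) ` U" by blast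
    qed
    have "skeletal (X u) (X s) (p u s)" using assms(2) u sS by blast
    then have "X s interior_of (X s closure_of (p u s ` W)) \<noteq> {}"
      unfolding skeletal_def using Wopen xu by blast
    moreover have "X s interior_of (X s closure_of (p u s ` W)) \<subseteq> X s interior_of (X s closure_of ((\<lambda>x. x s) ` U))"
      by (intro interior_of_mono closure_of_mono sub)
    ultimately show ?thesis by blast
  qed
  then show "skeletal (inv_limit S le X p) (X s) (\<lambda>x. x s)"
    unfolding skeletal_def using cont assms(3) sS by blast
qed

end
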